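(* For the binary tree-shifts $X_{16}=(C,E)$ and $X_{18}=(C,G)$, the limit $h_{PS}$ exists and $$h_{PS}(X_{16})=h_{PS}(X_{18})=\frac14\sum_{n=2}^\infty\frac{1}{2^n}\log\operatorname{Fib}(n+1),$$ i.e. one quarter of $h_{PS}((A,D))$, where $(\operatorname{Fib}(m))_{m\ge1}=(1,1,2,3,5,\dots)$ is the Fibonacci sequence.
   Context: Binary tree-shifts: $k=2$, directions $a_1,a_2$, alphabet $\{0,1\}$; $(P,Q)$ is the set of trees $t:\{a_1,a_2\}^*\to\{0,1\}$ with $P_{t_x,t_{xa_1}}=1$, $Q_{t_x,t_{xa_2}}=1$ for all nodes $x$. Matrices: $A=\begin{pmatrix}1&1\\1&1\end{pmatrix}$, $C=\begin{pmatrix}0&1\\1&0\end{pmatrix}$, $D=\begin{pmatrix}1&1\\1&0\end{pmatrix}$, $E=\begin{pmatrix}1&0\\1&1\end{pmatrix}$, $G=\begin{pmatrix}1&1\\0&1\end{pmatrix}$. $p(n)$ is the number of allowed blocks of length $n$ (labellings $t|_{\Delta_n}$, $\Delta_n$ the words of length $\le n$), and $h_{PS}=\lim_{n\to\infty}\frac{\log p(n)}{1+2+\cdots+2^n}$. *)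

theory Defs
  imports "HOL-Analysis.Analysis" "HOL-Number_Theory.Fib"
begin

text \<open>Directions: False = a1, True = a2; nodes are words
  (lists) over the directions; alphabet {0,1} (as nat). A 2x2 0/1 matrix is a
  function nat => nat => nat, only entries at indices 0,1 matter.\<close>

type_synonym node = "bool list"
type_synonym tree = "node \<Rightarrow> nat"
type_synonym mat2 = "nat \<Rightarrow> nat \<Rightarrow> nat"

definition matA :: mat2 where "matA i j = 1"
definition matC :: mat2 where "matC i j = (if i \<noteq> j then 1 else 0)"
definition matD :: mat2 where "matD i j = (if i = 1 \<and> j = 1 then 0 else 1)"
definition matE :: mat2 where "matE i j = (if i = 0 \<and> j = 1 then 0 else 1)"
definition matG :: mat2 where "matG i j = (if i = 1 \<and> j = 0 then 0 else 1)"

definition tree_shift :: "mat2 \<Rightarrow> mat2 \<Rightarrow> tree set" where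
  "tree_shift P Q = {t. (\<forall>x. t x \<in> {0,1}) \<and>
       (\<forall>x. P (t x) (t (x @ [False])) = 1 \<and> Q (t x) (t (x @ [True])) = 1)}"

text \<open>Restriction of a tree to Delta_n (words of length \<le> n), extended by 0.\<close>
definition restrict_block :: "nat \<Rightarrow> tree \<Rightarrow> tree" where
  "restrict_block n t = (\<lambda>x. if length x \<le> n then t x else 0)"

definition num_blocks :: "tree set \<Rightarrow> nat \<Rightarrow> nat" where
  "num_blocks X n = card (restrict_block n ` X)"

definition hps_seq :: "tree set \<Rightarrow> nat \<Rightarrow> real" where
  "hps_seq X n = ln (real (num_blocks X n)) / (\<Sum>i\<le>n. 2 ^ i)"

end

theory Submission
  imports Defs
begin

definition sub :: "tree \<Rightarrow> bool \<Rightarrow> tree" where "sub t d = (\<lambda>x. t (d # x))"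
definition join :: "nat \<Rightarrow> tree \<Rightarrow> tree \<Rightarrow> tree" where
  "join a l r = (\<lambda>x. case x of [] \<Rightarrow> a | d # y \<Rightarrow> (if d then r y else l y))"
definition Blk :: "tree set \<Rightarrow> nat \<Rightarrow> nat \<Rightarrow> tree set" where
  "Blk X n a = restrict_block n ` {t\<in>X. t [] = a}"

lemma join_sub: "join (t []) (sub t False) (sub t True) = t"
  by (rule ext) (auto simp: join_def sub_def split: list.split)

lemma join_simps [simp]: "join a l r [] = a" "join a l r (False # x) = l x" "join a l r (True # x) = r x"
  by (auto simp: join_def)

lemma sub_join [simp]: "sub (join a l r) False = l" "sub (join a l r) True = r"
  by (auto simp: sub_def)

lemma ts_vals: "t \<in> tree_shift P Q \<Longrightarrow> t x \<in> {0,1}"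
  by (simp add: tree_shift_def)

lemma ts_iff: "t \<in> tree_shift P Q \<longleftrightarrow> t [] \<in> {0,1} \<and> P (t []) (t [False]) = 1 \<and> Q (t []) (t [True]) = 1
   \<and> sub t False \<in> tree_shift P Q \<and> sub t True \<in> tree_shift P Q"
proof
  assume t: "t \<in> tree_shift P Q"
  have a: "\<And>x. t x \<in> {0,1}" and b: "\<And>x. P (t x) (t (x @ [False])) = 1" and c: "\<And>x. Q (t x) (t (x @ [True])) = 1"
    using t by (auto simp: tree_shift_def)
  have "sub t d \<in> tree_shift P Q" for d
    unfolding tree_shift_def sub_def using a b[of "d # _"] c[of "d # _"] by auto
  then show "t [] \<in> {0,1} \<and> P (t []) (t [False]) = 1 \<and> Q (t []) (t [True]) = 1
   \<and> sub t False \<in> tree_shift P Q \<and> sub t True \<in> tree_shift P Q"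
    using a b[of "[]"] c[of "[]"] by auto
next
  assume h: "t [] \<in> {0,1} \<and> P (t []) (t [False]) = 1 \<and> Q (t []) (t [True]) = 1
   \<and> sub t False \<in> tree_shift P Q \<and> sub t True \<in> tree_shift P Q"
  have v: "t x \<in> {0,1}" for x
  proof (cases x)
    case Nil then show ?thesis using h by simp
  next
    case (Cons d y) then show ?thesis using h ts_vals[of "sub t d" P Q y]
      by (cases d) (auto simp: sub_def)
  qed
  have e: "P (t x) (t (x @ [False])) = 1 \<and> Q (t x) (t (x @ [True])) = 1" for x
  proof (cases x)
    case Nil then show ?thesis using h by simp
  next
    case (Cons d y)
    have "sub t d \<in> tree_shift P Q" using h by (cases d) auto
    then show ?thesis using Cons by (auto simp: tree_shift_def sub_def)
  qed
  show "t \<in> tree_shift P Q" using v e by (auto simp: tree_shift_def)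
qed

lemma join_in: "join a l r \<in> tree_shift P Q \<longleftrightarrow> a \<in> {0,1} \<and> P a (l []) = 1 \<and> Q a (r []) = 1
   \<and> l \<in> tree_shift P Q \<and> r \<in> tree_shift P Q"
  by (subst ts_iff) simp

lemma rb_join: "restrict_block (Suc n) (join a l r) = join a (restrict_block n l) (restrict_block n r)"
  by (rule ext) (auto simp: restrict_block_def join_def split: list.split)

lemma rb_root [simp]: "restrict_block n t [] = t []" by (simp add: restrict_block_def)

lemma Blk_root: "s \<in> Blk X n b \<Longrightarrow> s [] = b"
  by (auto simp: Blk_def)

lemma Blk_disj: "b \<noteq> c \<Longrightarrow> Blk X n b \<inter> Blk X n c = {}"
proof (rule ccontr)
  assume "b \<noteq> c" "Blk X n b \<inter> Blk X n c \<noteq> {}"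
  then obtain s where "s \<in> Blk X n b" "s \<in> Blk X n c" by blast
  then have "s [] = b" "s [] = c" using Blk_root by blast+
  then show False using \<open>b \<noteq> c\<close> by simp
qed

lemma join_inj: "join a l r = join a l' r' \<Longrightarrow> l = l' \<and> r = r'"
proof -
  assume h: "join a l r = join a l' r'"
  have "l x = l' x" for x using fun_cong[OF h, of "False # x"] by simp
  moreover have "r x = r' x" for x using fun_cong[OF h, of "True # x"] by simp
  ultimately show ?thesis by auto
qed

lemma Blk_Suc:
  assumes a: "a \<in> {0,1}"
  shows "Blk (tree_shift P Q) (Suc n) a = (\<lambda>(l,r). join a l r) `
     ((\<Union>b\<in>{b. b\<in>{0,1} \<and> P a b = 1}. Blk (tree_shift P Q) n b) \<times>
      (\<Union>c\<in>{c. c\<in>{0,1} \<and> Q a c = 1}. Blk (tree_shift P Q) n c))"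
  (is "?L = ?R")
proof
  show "?L \<subseteq> ?R"
  proof
    fix s assume "s \<in> ?L"
    then obtain t where t: "t \<in> tree_shift P Q" "t [] = a" "s = restrict_block (Suc n) t"
      by (auto simp: Blk_def)
    have tt: "P a (t [False]) = 1" "Q a (t [True]) = 1" "sub t False \<in> tree_shift P Q" "sub t True \<in> tree_shift P Q"
      using t ts_iff[of t P Q] by auto
    have r1: "t [False] \<in> {0,1}" "t [True] \<in> {0,1}" using ts_vals[OF t(1)] by auto
    have "s = join a (restrict_block n (sub t False)) (restrict_block n (sub t True))"
      using t join_sub[of t] rb_join by metis
    moreover have "restrict_block n (sub t False) \<in> Blk (tree_shift P Q) n (t [False])"
      using tt by (auto simp: Blk_def sub_def)
    moreover have "restrict_block n (sub t True) \<in> Blk (tree_shift P Q) n (t [True])"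
      using tt by (auto simp: Blk_def sub_def)
    ultimately show "s \<in> ?R" using tt r1 by (auto intro!: image_eqI[where x="(restrict_block n (sub t False), restrict_block n (sub t True))"])
  qed
next
  show "?R \<subseteq> ?L"
  proof
    fix s assume "s \<in> ?R"
    then obtain l r b c where s: "s = join a l r" and b: "b \<in> {0,1}" "P a b = 1" and c: "c \<in> {0,1}" "Q a c = 1"
      and l: "l \<in> Blk (tree_shift P Q) n b" and r: "r \<in> Blk (tree_shift P Q) n c" by auto
    obtain l0 where l0: "l0 \<in> tree_shift P Q" "l0 [] = b" "l = restrict_block n l0" using l by (auto simp: Blk_def)
    obtain r0 where r0: "r0 \<in> tree_shift P Q" "r0 [] = c" "r = restrict_block n r0" using r by (auto simp: Blk_def)
    have "join a l0 r0 \<in> tree_shift P Q" using join_in a b c l0 r0 by auto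
    moreover have "s = restrict_block (Suc n) (join a l0 r0)" using s l0 r0 rb_join by simp
    ultimately show "s \<in> ?L" unfolding Blk_def by auto
  qed
qed

lemma Blk_0_sub: "Blk X 0 a \<subseteq> {\<lambda>x. if x = [] then a else 0}"
  by (auto simp: Blk_def restrict_block_def)

lemma Blk_finite: "a \<in> {0,1} \<Longrightarrow> finite (Blk (tree_shift P Q) n a)"
proof (induction n arbitrary: a)
  case 0 then show ?case using Blk_0_sub finite_subset by blast
next
  case (Suc n)
  show ?case unfolding Blk_Suc[OF Suc.prems] using Suc.IH by auto
qed

lemma Blk_card_Suc:
  assumes a: "a \<in> {0,1}"
  shows "card (Blk (tree_shift P Q) (Suc n) a) =
    (\<Sum>b\<in>{b. b\<in>{0,1} \<and> P a b = 1}. card (Blk (tree_shift P Q) n b)) *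
    (\<Sum>c\<in>{c. c\<in>{0,1} \<and> Q a c = 1}. card (Blk (tree_shift P Q) n c))"
proof -
  let ?X = "tree_shift P Q"
  have inj: "inj_on (\<lambda>(l,r). join a l r) A" for A
    by (auto simp: inj_on_def dest: join_inj)
  have fin: "finite {b. b\<in>{0,1} \<and> R b}" for R :: "nat \<Rightarrow> bool" by auto
  have un: "card (\<Union>b\<in>{b. b\<in>{0,1} \<and> R b}. Blk ?X n b) = (\<Sum>b\<in>{b. b\<in>{0,1} \<and> R b}. card (Blk ?X n b))" for R
    by (rule card_UN_disjoint[OF fin]) (use Blk_disj[of 0 1 "tree_shift P Q" n] Blk_disj[of 1 0 "tree_shift P Q" n] in \<open>auto intro: Blk_finite\<close>)
  show ?thesis unfolding Blk_Suc[OF a] card_image[OF inj] card_cartesian_product un ..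
qed

lemma Blk_card_0:
  assumes "t \<in> X" "t [] = a"
  shows "card (Blk X 0 a) = 1"
proof -
  have "Blk X 0 a \<noteq> {}" using assms by (auto simp: Blk_def)
  then have "Blk X 0 a = {\<lambda>x. if x = [] then a else 0}" using Blk_0_sub by blast
  then show ?thesis by simp
qed

lemma wit_in:
  assumes "P 0 1 = 1" "P 1 0 = 1" "Q 0 0 = 1" "Q 1 1 = 1"
  shows "(\<lambda>x. (a + length (filter Not x)) mod 2) \<in> tree_shift P Q"
proof -
  have m: "k mod 2 = 0 \<and> Suc k mod 2 = 1 \<or> k mod 2 = 1 \<and> Suc k mod 2 = 0" for k :: nat
    by presburger
  have p: "P (k mod 2) (Suc k mod 2) = 1" "Q (k mod 2) (k mod 2) = 1" for k
    using m[of k] assms by auto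
  show ?thesis unfolding tree_shift_def using p by auto
qed

lemma num_blocks_Blk:
  "num_blocks (tree_shift P Q) n = card (Blk (tree_shift P Q) n 0) + card (Blk (tree_shift P Q) n 1)"
proof -
  have "restrict_block n ` tree_shift P Q = Blk (tree_shift P Q) n 0 \<union> Blk (tree_shift P Q) n 1"
    unfolding Blk_def using ts_vals by blast
  then show ?thesis unfolding num_blocks_def
    by (simp add: card_Un_disjoint Blk_finite Blk_disj)
qed

fun W :: "nat \<Rightarrow> nat" where
  "W 0 = 1" | "W (Suc n) = W n ^ 2 * fib (Suc n)"

lemma sets_CEG:
  "{b. b\<in>{0,1} \<and> matC 0 b = 1} = {1}" "{b. b\<in>{0,1} \<and> matC 1 b = 1} = {0}"
  "{b. b\<in>{0,1} \<and> matE 0 b = 1} = {0}" "{b. b\<in>{0,1} \<and> matE 1 b = 1} = {0,1}"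
  "{b. b\<in>{0,1} \<and> matG 0 b = 1} = {0,1}" "{b. b\<in>{0,1} \<and> matG 1 b = 1} = {1}"
  by (auto simp: matC_def matE_def matG_def)

lemma wits:
  "matC 0 1 = 1" "matC 1 0 = 1" "matE 0 0 = 1" "matE 1 1 = 1" "matG 0 0 = 1" "matG 1 1 = 1"
  by (auto simp: matC_def matE_def matG_def)

lemma base_card:
  assumes "P 0 1 = 1" "P 1 0 = 1" "Q 0 0 = 1" "Q 1 1 = 1" "a \<in> {0,1}"
  shows "card (Blk (tree_shift P Q) 0 a) = 1"
  by (rule Blk_card_0[OF wit_in[of P Q a, OF assms(1-4)]]) (use assms(5) in auto)

lemma card_CE: "card (Blk (tree_shift matC matE) n 0) = fib (Suc n) * W n \<and>
   card (Blk (tree_shift matC matE) n 1) = fib (Suc (Suc n)) * W n"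
proof (induction n)
  case 0 then show ?case using base_card[of matC matE, OF wits(1-4)] by simp
next
  case (Suc n)
  have d: "(0::nat) \<noteq> 1" by simp
  show ?case
  proof -
    have e0: "card (Blk (tree_shift matC matE) (Suc n) 0) = card (Blk (tree_shift matC matE) n 1) * card (Blk (tree_shift matC matE) n 0)"
      using Blk_card_Suc[of 0 matC matE n] unfolding sets_CEG by simp
    have e1: "card (Blk (tree_shift matC matE) (Suc n) 1) = card (Blk (tree_shift matC matE) n 0) * (card (Blk (tree_shift matC matE) n 0) + card (Blk (tree_shift matC matE) n 1))"
      using Blk_card_Suc[of 1 matC matE n] unfolding sets_CEG by simp
    have f: "fib (Suc (Suc (Suc n))) = fib (Suc (Suc n)) + fib (Suc n)" by simp
    show ?thesis unfolding e0 e1 using Suc.IH f by (simp add: algebra_simps power2_eq_square)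
  qed
qed

lemma card_CG: "card (Blk (tree_shift matC matG) n 1) = fib (Suc n) * W n \<and>
   card (Blk (tree_shift matC matG) n 0) = fib (Suc (Suc n)) * W n"
proof (induction n)
  case 0 then show ?case using base_card[of matC matG, OF wits(1,2,5,6)] by simp
next
  case (Suc n)
  show ?case
  proof -
    have e0: "card (Blk (tree_shift matC matG) (Suc n) 1) = card (Blk (tree_shift matC matG) n 0) * card (Blk (tree_shift matC matG) n 1)"
      using Blk_card_Suc[of 1 matC matG n] unfolding sets_CEG by simp
    have e1: "card (Blk (tree_shift matC matG) (Suc n) 0) = card (Blk (tree_shift matC matG) n 1) * (card (Blk (tree_shift matC matG) n 0) + card (Blk (tree_shift matC matG) n 1))"
      using Blk_card_Suc[of 0 matC matG n] unfolding sets_CEG by simp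
    have f: "fib (Suc (Suc (Suc n))) = fib (Suc (Suc n)) + fib (Suc n)" by simp
    show ?thesis unfolding e0 e1 using Suc.IH f by (simp add: algebra_simps power2_eq_square)
  qed
qed

lemma nb_CE: "num_blocks (tree_shift matC matE) n = fib (n + 3) * W n"
  using card_CE[of n] by (simp add: num_blocks_Blk numeral_3_eq_3 algebra_simps)

lemma nb_CG: "num_blocks (tree_shift matC matG) n = fib (n + 3) * W n"
  using card_CG[of n] by (simp add: num_blocks_Blk numeral_3_eq_3 algebra_simps)

lemma W_pos: "W n > 0" by (induction n) (auto simp: fib_neq_0_nat)

lemma fib_bound: "real (fib n) \<le> (7/4)^n"
proof (induction n rule: fib.induct)
  case 1 then show ?case by simp
next
  case 2 then show ?case by simp
next
  case (3 n)
  have "real (fib (Suc (Suc n))) = real (fib (Suc n)) + real (fib n)" by simp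
  also have "\<dots> \<le> (7/4)^Suc n + (7/4)^n" using 3 by simp
  also have "\<dots> \<le> (7/4)^Suc (Suc n)" by simp
  finally show ?case .
qed

definition ff :: "nat \<Rightarrow> real" where "ff k = ln (real (fib (Suc k))) / 2 ^ Suc k"

lemma ff_nonneg: "ff k \<ge> 0"
proof -
  have "real (fib (Suc k)) \<ge> 1" using fib_neq_0_nat[of "Suc k"] by simp
  then show ?thesis by (simp add: ff_def)
qed

lemma ff_le: "ff k \<le> (7/8)^k"
proof -
  have p: "real (fib (Suc k)) > 0" using fib_neq_0_nat[of "Suc k"] by simp
  have "ln (real (fib (Suc k))) \<le> real (fib (Suc k))" using ln_le_minus_one[OF p] by simp
  also have "\<dots> \<le> (7/4)^Suc k" by (rule fib_bound)
  finally have "ln (real (fib (Suc k))) / 2^Suc k \<le> (7/4)^Suc k / 2^Suc k"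
    by (rule divide_right_mono) simp
  then have "ff k \<le> (7/4)^Suc k / 2^Suc k" unfolding ff_def .
  also have "\<dots> = (7/8)^Suc k" by (subst power_divide[symmetric]) simp
  also have "\<dots> \<le> (7/8)^k" by (simp add: power_decreasing)
  finally show ?thesis .
qed

lemma ff_summable: "summable ff"
  by (rule summable_comparison_test[where g="\<lambda>k. (7/8)^k"])
     (use ff_nonneg ff_le in \<open>auto intro!: summable_geometric\<close>)

lemma w_sum: "ln (real (W n)) / 2^n = (\<Sum>k<n. ff k)"
proof (induction n)
  case 0 then show ?case by simp
next
  case (Suc n)
  have p1: "real (W n) > 0" using W_pos[of n] by simp
  have p2: "real (fib (Suc n)) > 0" using fib_neq_0_nat[of "Suc n"] by simp
  have "ln (real (W (Suc n))) = 2 * ln (real (W n)) + ln (real (fib (Suc n)))"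
    using p1 p2 by (simp add: ln_mult ln_realpow)
  then have "ln (real (W (Suc n))) / 2^Suc n = ln (real (W n)) / 2^n + ff n"
    by (simp add: ff_def field_simps)
  then show ?case using Suc by simp
qed

lemma geo_sum: "(\<Sum>i\<le>n. (2::real)^i) = 2^Suc n - 1"
  by (induction n) auto

lemma alg_aux: "(q::real) \<ge> 1 \<Longrightarrow> (a/q + b/q)/(2 - 1/q) = (a+b)/(2*q-1)"
  by (simp add: field_simps)

lemma hps_limit:
  assumes nb: "\<And>n. num_blocks X n = fib (n + 3) * W n"
  shows "hps_seq X \<longlonglongrightarrow> (1/4) * (\<Sum>n. ln (real (fib (n + 3))) / 2 ^ (n + 2))"
proof -
  define T where "T = (\<lambda>n. ln (real (fib (n + 3))) / 2 ^ (n + 2))"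
  have Tff: "T n = 2 * ff (n + 2)" for n
    by (simp add: T_def ff_def eval_nat_numeral)
  have sT: "summable T"
    unfolding Tff using summable_ignore_initial_segment[OF ff_summable, of 2] by (rule summable_mult)
  have ff01: "ff 0 = 0" "ff 1 = 0" by (simp_all add: ff_def)
  have "suminf ff = (\<Sum>n. ff (n + 2)) + (\<Sum>i<2. ff i)"
    by (rule suminf_split_initial_segment[OF ff_summable])
  also have "(\<Sum>i<2. ff i) = 0" using ff01 by (simp add: eval_nat_numeral)
  also have "(\<lambda>n. ff (n + 2)) = (\<lambda>n. (1/2) * T n)" using Tff by auto
  also have "(\<Sum>n. (1/2) * T n) = (1/2) * suminf T" by (rule suminf_mult[OF sT])
  finally have sv: "suminf ff / (2 - 0) = (1/4) * suminf T" by simp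
  have eq: "hps_seq X n = (ln (real (W n)) / 2^n + 8 * ff (n + 2)) / (2 - (1/2)^n)" for n
  proof -
    have p1: "real (W n) > 0" using W_pos[of n] by simp
    have p2: "real (fib (n+3)) > 0" using fib_neq_0_nat[of "n+3"] by simp
    have l: "ln (real (num_blocks X n)) = ln (real (W n)) + ln (real (fib (n+3)))"
      unfolding nb using p1 p2 by (simp add: ln_mult)
    have f8: "8 * ff (n + 2) = ln (real (fib (n+3))) / 2^n"
      by (simp add: ff_def eval_nat_numeral)
    have q: "(2::real)^n \<ge> 1" by simp
    show ?thesis unfolding hps_seq_def geo_sum l f8 power_one_over alg_aux[OF q]
      by (simp add: add.commute)
  qed
  have t1: "(\<lambda>n. ln (real (W n)) / 2^n) \<longlonglongrightarrow> suminf ff"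
    unfolding w_sum by (rule summable_LIMSEQ[OF ff_summable])
  have t2: "(\<lambda>n. 8 * ff (n + 2)) \<longlonglongrightarrow> 8 * 0"
    by (intro tendsto_mult tendsto_const LIMSEQ_ignore_initial_segment summable_LIMSEQ_zero[OF ff_summable])
  have t3: "(\<lambda>n. (2::real) - (1/2)^n) \<longlonglongrightarrow> 2 - 0"
    by (intro tendsto_diff tendsto_const LIMSEQ_power_zero) simp
  have "(\<lambda>n. (ln (real (W n)) / 2^n + 8 * ff (n + 2)) / (2 - (1/2)^n)) \<longlonglongrightarrow> (suminf ff + 8 * 0) / (2 - 0)"
    by (rule tendsto_divide[OF tendsto_add[OF t1 t2] t3]) simp
  then have "hps_seq X \<longlonglongrightarrow> (suminf ff + 8 * 0) / (2 - 0)" unfolding eq[abs_def] .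
  moreover have "(suminf ff + 8 * 0) / (2 - 0) = (1/4) * suminf T" using sv by simp
  ultimately have "hps_seq X \<longlonglongrightarrow> (1/4) * suminf T" by (simp only:)
  then show ?thesis unfolding T_def .
qed

theorem mainTheorem18:
  shows "hps_seq (tree_shift matC matE) \<longlonglongrightarrow>
            (1/4) * (\<Sum>n. ln (real (fib (n + 3))) / 2 ^ (n + 2)) \<and>
         hps_seq (tree_shift matC matG) \<longlonglongrightarrow>
            (1/4) * (\<Sum>n. ln (real (fib (n + 3))) / 2 ^ (n + 2))"
  using hps_limit[OF nb_CE] hps_limit[OF nb_CG] by blast

end
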